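(* Let $(X,d,\mathfrak{m})$ be a very strict $CD(K,N)$-space ($K\in\mathbb{R}$, $N\in(1,\infty]$), let $\mu_0,\mu_1\in\mathcal{P}_2^{ac}(X)$ have bounded supports, and let $\pi\in\mathrm{OptGeo}(\mu_0,\mu_1)$ be a plan as provided by the definition of very strict $CD(K,N)$-space (i.e. satisfying the convexity inequality below for every admissible $F$, $t_1<t_2$ and $t$). Then $\mu_t:=(e_t)_\#\pi\in\mathcal{P}_2^{ac}(X)$ for all $t\in(0,1)$.
   Context: Standing assumptions: $(X,d)$ complete and separable, $\mathfrak{m}$ a locally finite Borel measure. $\mathrm{Geo}(X)$: constant speed geodesics $\gamma\colon[0,1]\to X$ with sup metric; $e_t(\gamma)=\gamma_t$. $\mathcal{P}_2(X)$: Borel probability measures with finite second moment; $\mathcal{P}_2^{ac}(X)$: those $\ll\mathfrak{m}$. $\mathrm{OptGeo}(\mu_0,\mu_1)$: $\pi\in\mathcal{P}(\mathrm{Geo}(X))$ with $(e_0,e_1)_\#\pi$ an optimal coupling for cost $d^2$. $\mathrm{restr}_{t_1}^{t_2}(\gamma)(t)=\gamma(tt_2+(1-t)t_1)$; $\pi^{-1}$ is the pushforward of $\pi$ under $\gamma\mapsto\gamma(1-\cdot)$. $\sigma^{(t)}_{K,N}(\theta)$ ($N\in(0,\infty]$): $=t$ if $N=\infty$ or $K=0$; $=\infty$ if $K\theta^2\ge N\pi^2$; $=\sin(t\theta\sqrt{K/N})/\sin(\theta\sqrt{K/N})$ if $0<K\theta^2<N\pi^2$; $=\sinh(t\theta\sqrt{-K/N})/\sinh(\theta\sqrt{-K/N})$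 if $K<0$. For $N\in(1,\infty)$, $t>0$: $\beta^{(t)}_{K,N}(\theta)=t^{1-N}(\sigma^{(t)}_{K,N-1}(\theta))^{N-1}$; $\beta^{(t)}_{K,\infty}(\theta)=e^{\frac K6(1-t^2)\theta^2}$; $\beta^{(0)}_{K,N}\equiv1$. For $\mu=\rho\mathfrak{m}+\mu^\perp$: $\mathrm{Ent}_N(\mu)=-\int\rho^{1-1/N}d\mathfrak{m}$ ($N<\infty$), $\mathrm{Ent}_\infty(\mu)=\int\rho\log\rho\,d\mathfrak{m}+\infty\cdot\mu^\perp(X)$. For $\pi$ with $(e_0)_\#\pi=\mu_0=\rho_0\mathfrak{m}+\mu_0^\perp$: $\mathrm{Ent}^{(t)}_{N,\pi}(\mu_0)=-\int(\beta^{(t)}_{K,N}(d(\gamma_0,\gamma_1)))^{1/N}\rho_0(\gamma_0)^{-1/N}d\pi$ ($N<\infty$), $\mathrm{Ent}^{(t)}_{\infty,\pi}(\mu_0)=\int\log(\rho_0(\gamma_0)/\beta^{(t)}_{K,\infty}(d(\gamma_0,\gamma_1)))d\pi+\infty\cdot\mu_0^\perp(X)$. Very strict $CD(K,N)$: for all $\mu_0,\mu_1\in\mathcal{P}_2^{ac}(X)$ with bounded supports there exists $\pi\in\mathrm{OptGeo}(\mu_0,\mu_1)$ such that for all bounded non-negative Borel $F$ on $\mathrm{Geo}(X)$ with $\int Fd\pi=1$, all $0\le t_1<t_2\le1$ and all $t\in[0,1]$, with $\tilde\pi=(\mathrm{restr}_{t_1}^{t_2})_\#(F\pi)$, $\tilde\mu_t=(e_t)_\#\tilde\pi$: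 $\mathrm{Ent}_N(\tilde\mu_t)\le(1-t)\mathrm{Ent}^{(1-t)}_{N,\tilde\pi}(\tilde\mu_0)+t\,\mathrm{Ent}^{(t)}_{N,\tilde\pi^{-1}}(\tilde\mu_1)$. *)

theory Defs
  imports "HOL-Probability.Probability"
begin

text \<open>X is a type of class polish_space (complete, separable metric space), d = dist,
  and the reference measure m is a Borel measure that is locally finite.\<close>

definition locally_finite_borel :: "'a::metric_space measure \<Rightarrow> bool" where
  "locally_finite_borel m \<longleftrightarrow> sets m = sets borel \<and>
     (\<forall>x. \<exists>e>0. emeasure m (ball x e) < \<infinity>)"

definition prob_borel :: "'a::topological_space measure \<Rightarrow> bool" where
  "prob_borel \<mu> \<longleftrightarrow> prob_space \<mu> \<and> sets \<mu> = sets borel"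

definition P2 :: "'a::metric_space measure \<Rightarrow> bool" where
  "P2 \<mu> \<longleftrightarrow> prob_borel \<mu> \<and> (\<exists>x0. (\<integral>\<^sup>+ x. ennreal ((dist x x0)\<^sup>2) \<partial>\<mu>) < \<infinity>)"

definition P2ac :: "'a::metric_space measure \<Rightarrow> 'a measure \<Rightarrow> bool" where
  "P2ac m \<mu> \<longleftrightarrow> P2 \<mu> \<and> absolutely_continuous m \<mu>"

definition msupp :: "'a::metric_space measure \<Rightarrow> 'a set" where
  "msupp \<mu> = {x. \<forall>e>0. emeasure \<mu> (ball x e) > 0}"

definition bounded_support :: "'a::metric_space measure \<Rightarrow> bool" where
  "bounded_support \<mu> \<longleftrightarrow> bounded (msupp \<mu>)"

definition coupling :: "'a::metric_space measure \<Rightarrow> 'a measure \<Rightarrow> ('a \<times> 'a) measure \<Rightarrow> bool" where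
  "coupling \<mu>0 \<mu>1 \<gamma> \<longleftrightarrow> prob_borel \<gamma> \<and>
     distr \<gamma> borel fst = \<mu>0 \<and> distr \<gamma> borel snd = \<mu>1"

definition transport_cost :: "('a::metric_space \<times> 'a) measure \<Rightarrow> ennreal" where
  "transport_cost \<gamma> = (\<integral>\<^sup>+ p. ennreal ((dist (fst p) (snd p))\<^sup>2) \<partial>\<gamma>)"

definition optimal_coupling :: "'a::metric_space measure \<Rightarrow> 'a measure \<Rightarrow> ('a \<times> 'a) measure \<Rightarrow> bool" where
  "optimal_coupling \<mu>0 \<mu>1 \<gamma> \<longleftrightarrow> coupling \<mu>0 \<mu>1 \<gamma> \<and>
     (\<forall>\<gamma>'. coupling \<mu>0 \<mu>1 \<gamma>' \<longrightarrow> transport_cost \<gamma> \<le> transport_cost \<gamma>')"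

text \<open>A curve [0,1] -> X is represented by a bounded continuous function on the reals
  that is constant outside [0,1] (extended via clamping); the metric of the type
  real =>C a is then exactly the sup metric on [0,1].\<close>

definition clamp01 :: "real \<Rightarrow> real" where
  "clamp01 t = max 0 (min 1 t)"

definition Geo :: "(real \<Rightarrow>\<^sub>C 'a::metric_space) set" where
  "Geo = {\<gamma>. (\<forall>t. apply_bcontfun \<gamma> t = apply_bcontfun \<gamma> (clamp01 t)) \<and>
     (\<forall>s\<in>{0..1}. \<forall>t\<in>{0..1}. dist (apply_bcontfun \<gamma> s) (apply_bcontfun \<gamma> t)
        = \<bar>s - t\<bar> * dist (apply_bcontfun \<gamma> 0) (apply_bcontfun \<gamma> 1))}"

definition GeoM :: "(real \<Rightarrow>\<^sub>C 'a::metric_space) measure" where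
  "GeoM = restrict_space borel Geo"

definition eval_at :: "real \<Rightarrow> (real \<Rightarrow>\<^sub>C 'a::metric_space) \<Rightarrow> 'a" where
  "eval_at t \<gamma> = apply_bcontfun \<gamma> t"

definition restr :: "real \<Rightarrow> real \<Rightarrow> (real \<Rightarrow>\<^sub>C 'a::metric_space) \<Rightarrow> (real \<Rightarrow>\<^sub>C 'a)" where
  "restr t1 t2 \<gamma> = Bcontfun (\<lambda>t. apply_bcontfun \<gamma> (clamp01 t * t2 + (1 - clamp01 t) * t1))"

definition reverse_geo :: "(real \<Rightarrow>\<^sub>C 'a::metric_space) \<Rightarrow> (real \<Rightarrow>\<^sub>C 'a)" where
  "reverse_geo \<gamma> = Bcontfun (\<lambda>t. apply_bcontfun \<gamma> (1 - t))"

definition plan_inv :: "(real \<Rightarrow>\<^sub>C 'a::metric_space) measure \<Rightarrow> (real \<Rightarrow>\<^sub>C 'a) measure" where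
  "plan_inv \<pi> = distr \<pi> GeoM reverse_geo"

definition OptGeo :: "'a::metric_space measure \<Rightarrow> 'a measure \<Rightarrow> (real \<Rightarrow>\<^sub>C 'a) measure \<Rightarrow> bool" where
  "OptGeo \<mu>0 \<mu>1 \<pi> \<longleftrightarrow> prob_space \<pi> \<and> sets \<pi> = sets GeoM \<and>
     optimal_coupling \<mu>0 \<mu>1 (distr \<pi> borel (\<lambda>\<gamma>. (eval_at 0 \<gamma>, eval_at 1 \<gamma>)))"

text \<open>sigma^{(t)}_{K,N}(theta) for real N > 0, with value infinity allowed.
  At theta = 0 (where the quotient formulas read 0/0) the value is t.\<close>

definition sigma_KN :: "real \<Rightarrow> real \<Rightarrow> real \<Rightarrow> real \<Rightarrow> ennreal" where
  "sigma_KN K N t \<theta> =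
    (if K = 0 then ennreal t
     else if K * \<theta>\<^sup>2 \<ge> N * pi\<^sup>2 then \<top>
     else if \<theta> = 0 then ennreal t
     else if K > 0 then ennreal (sin (t * \<theta> * sqrt (K / N)) / sin (\<theta> * sqrt (K / N)))
     else ennreal (sinh (t * \<theta> * sqrt (- K / N)) / sinh (\<theta> * sqrt (- K / N))))"

definition enn_powr :: "ennreal \<Rightarrow> real \<Rightarrow> ennreal" where
  "enn_powr x p = (if x = \<top> then \<top> else ennreal (enn2real x powr p))"

definition beta_KN :: "real \<Rightarrow> ereal \<Rightarrow> real \<Rightarrow> real \<Rightarrow> ennreal" where
  "beta_KN K N t \<theta> =
    (if t = 0 then 1
     else if N = \<infinity> then ennreal (exp (K / 6 * (1 - t\<^sup>2) * \<theta>\<^sup>2))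
     else ennreal (t powr (1 - real_of_ereal N)) *
            enn_powr (sigma_KN K (real_of_ereal N - 1) t \<theta>) (real_of_ereal N - 1))"

definition lebesgue_dec :: "'a::topological_space measure \<Rightarrow> 'a measure \<Rightarrow> ('a \<Rightarrow> real) \<Rightarrow> 'a set \<Rightarrow> bool" where
  "lebesgue_dec m \<mu> \<rho> S \<longleftrightarrow> \<rho> \<in> borel_measurable borel \<and> (\<forall>x. 0 \<le> \<rho> x) \<and>
     S \<in> sets borel \<and> emeasure m S = 0 \<and>
     (\<forall>A\<in>sets borel. emeasure \<mu> A = (\<integral>\<^sup>+ x\<in>A. ennreal (\<rho> x) \<partial>m) + emeasure \<mu> (A \<inter> S))"

definition ld_rho :: "'a::topological_space measure \<Rightarrow> 'a measure \<Rightarrow> 'a \<Rightarrow> real" where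
  "ld_rho m \<mu> = fst (SOME p. lebesgue_dec m \<mu> (fst p) (snd p))"

definition ld_S :: "'a::topological_space measure \<Rightarrow> 'a measure \<Rightarrow> 'a set" where
  "ld_S m \<mu> = snd (SOME p. lebesgue_dec m \<mu> (fst p) (snd p))"

text \<open>Extended integral of a real function: positive part minus negative part
  (Isabelle's ereal convention infinity - infinity = infinity applies).\<close>
definition ext_integral :: "'b measure \<Rightarrow> ('b \<Rightarrow> real) \<Rightarrow> ereal" where
  "ext_integral M f = enn2ereal (\<integral>\<^sup>+ x. ennreal (f x) \<partial>M) - enn2ereal (\<integral>\<^sup>+ x. ennreal (- f x) \<partial>M)"

definition Ent :: "'a::topological_space measure \<Rightarrow> ereal \<Rightarrow> 'a measure \<Rightarrow> ereal" where
  "Ent m N \<mu> =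
    (if N = \<infinity> then
       (if emeasure \<mu> (ld_S m \<mu>) > 0 then \<infinity>
        else ext_integral m (\<lambda>x. ld_rho m \<mu> x * ln (ld_rho m \<mu> x)))
     else - enn2ereal (\<integral>\<^sup>+ x. ennreal (ld_rho m \<mu> x powr (1 - 1 / real_of_ereal N)) \<partial>m))"

text \<open>Ent^{(t)}_{N,pi}(mu_0) with mu_0 = (e_0)_# pi.  For finite N the singular part
  of mu_0 does not contribute (rho_0^{-1/N} = 0 there, rho_0 = d mu_0/d m = \<infinity>);
  0^{-1/N} = \<infinity>.\<close>
definition Ent_plan :: "'a::metric_space measure \<Rightarrow> real \<Rightarrow> ereal \<Rightarrow> real \<Rightarrow> (real \<Rightarrow>\<^sub>C 'a) measure \<Rightarrow> ereal" where
  "Ent_plan m K N t \<pi> =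
    (let \<mu>0 = distr \<pi> borel (eval_at 0); \<rho> = ld_rho m \<mu>0; S = ld_S m \<mu>0 in
     if N = \<infinity> then
       (if emeasure \<mu>0 S > 0 then \<infinity>
        else ext_integral \<pi> (\<lambda>\<gamma>. ln (\<rho> (eval_at 0 \<gamma>) /
                  enn2real (beta_KN K N t (dist (eval_at 0 \<gamma>) (eval_at 1 \<gamma>))))))
     else - enn2ereal (\<integral>\<^sup>+ \<gamma>. (if eval_at 0 \<gamma> \<in> S then 0 else
              enn_powr (beta_KN K N t (dist (eval_at 0 \<gamma>) (eval_at 1 \<gamma>))) (1 / real_of_ereal N) *
              (if \<rho> (eval_at 0 \<gamma>) = 0 then \<top> else ennreal (\<rho> (eval_at 0 \<gamma>) powr (- 1 / real_of_ereal N)))) \<partial>\<pi>))"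

definition vs_CD_plan :: "'a::metric_space measure \<Rightarrow> real \<Rightarrow> ereal \<Rightarrow> (real \<Rightarrow>\<^sub>C 'a) measure \<Rightarrow> bool" where
  "vs_CD_plan m K N \<pi> \<longleftrightarrow>
    (\<forall>F::(real \<Rightarrow>\<^sub>C 'a) \<Rightarrow> real.
       F \<in> borel_measurable GeoM \<and> (\<forall>\<gamma>. 0 \<le> F \<gamma>) \<and> (\<exists>C. \<forall>\<gamma>. F \<gamma> \<le> C) \<and>
       (\<integral>\<^sup>+ \<gamma>. ennreal (F \<gamma>) \<partial>\<pi>) = 1 \<longrightarrow>
       (\<forall>t1 t2 t. 0 \<le> t1 \<and> t1 < t2 \<and> t2 \<le> 1 \<and> 0 \<le> t \<and> t \<le> 1 \<longrightarrow>
         (let \<pi>' = distr (density \<pi> (\<lambda>\<gamma>. ennreal (F \<gamma>))) GeoM (restr t1 t2) in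
          Ent m N (distr \<pi>' borel (eval_at t))
            \<le> ereal (1 - t) * Ent_plan m K N (1 - t) \<pi>'
              + ereal t * Ent_plan m K N t (plan_inv \<pi>'))))"

definition very_strict_CD :: "'a::metric_space measure \<Rightarrow> real \<Rightarrow> ereal \<Rightarrow> bool" where
  "very_strict_CD m K N \<longleftrightarrow>
    (\<forall>\<mu>0 \<mu>1. P2ac m \<mu>0 \<and> P2ac m \<mu>1 \<and> bounded_support \<mu>0 \<and> bounded_support \<mu>1 \<longrightarrow>
       (\<exists>\<pi>. OptGeo \<mu>0 \<mu>1 \<pi> \<and> vs_CD_plan m K N \<pi>))"

end

theory Submission
  imports Defs
begin

lemma space_GeoM[simp]: "space GeoM = Geo"
  by (simp add: GeoM_def space_restrict_space)

lemma sets_GeoM_sub: "A \<in> sets GeoM \<Longrightarrow> A \<subseteq> Geo"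
  using sets.sets_into_space by fastforce

lemma continuous_eval_at: "continuous_on UNIV (eval_at t :: (real \<Rightarrow>\<^sub>C 'a::metric_space) \<Rightarrow> 'a)"
proof -
  have "isCont (eval_at t) f" for f :: "real \<Rightarrow>\<^sub>C 'a"
    unfolding continuous_at_eps_delta eval_at_def
  proof (intro allI impI exI conjI)
    fix e :: real and y :: "real \<Rightarrow>\<^sub>C 'a" assume "0 < e" "dist y f < e"
    thus "dist (apply_bcontfun y t) (apply_bcontfun f t) < e"
      using dist_bounded[of y t f] by linarith
  qed
  thus ?thesis by (simp add: continuous_at_imp_continuous_on)
qed

lemma eval_at_borel[measurable]: "eval_at t \<in> borel_measurable (borel :: (real \<Rightarrow>\<^sub>C 'a::metric_space) measure)"
  by (rule borel_measurable_continuous_onI[OF continuous_eval_at])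

lemma eval_at_GeoM[measurable]: "eval_at t \<in> borel_measurable (GeoM :: (real \<Rightarrow>\<^sub>C 'a::metric_space) measure)"
  unfolding GeoM_def by (rule measurable_restrict_space1) simp

lemma locally_finite_sigma_finite:
  fixes m :: "'a::polish_space measure"
  assumes "locally_finite_borel m"
  shows "sigma_finite_measure m"
proof
  have sm: "sets m = sets borel" using assms by (simp add: locally_finite_borel_def)
  define F where "F = {B. \<exists>x e. B = ball x e \<and> emeasure m (ball x e) < \<infinity>}"
  have Fo: "\<And>S. S \<in> F \<Longrightarrow> open S" unfolding F_def by auto
  obtain F' where F': "F' \<subseteq> F" "countable F'" "\<Union>F' = \<Union>F"
    using Lindelof[of F, OF Fo] by blast
  have "x \<in> \<Union>F" for x :: 'a
  proof -
    obtain e where "e>0" "emeasure m (ball x e) < \<infinity>" using assms unfolding locally_finite_borel_def by blast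
    hence "ball x e \<in> F" unfolding F_def by blast
    thus ?thesis using \<open>e>0\<close> by (meson UnionI centre_in_ball)
  qed
  hence U: "\<Union>F' = UNIV" using F'(3) by blast
  have sp: "space m = UNIV" using sets_eq_imp_space_eq[OF sm] by simp
  have "F' \<subseteq> sets m" using F'(1) Fo sm by auto
  moreover have "\<forall>a\<in>F'. emeasure m a \<noteq> \<infinity>" using F'(1) unfolding F_def by auto
  ultimately show "\<exists>A. countable A \<and> A \<subseteq> sets m \<and> \<Union> A = space m \<and> (\<forall>a\<in>A. emeasure m a \<noteq> \<infinity>)"
    using F'(2) U sp by (intro exI[of _ F'] conjI) simp_all
qed

lemma ld_exists:
  assumes "\<exists>\<rho> S. lebesgue_dec m \<mu> \<rho> S"
  shows "lebesgue_dec m \<mu> (ld_rho m \<mu>) (ld_S m \<mu>)"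
proof -
  from assms obtain \<rho> S where "lebesgue_dec m \<mu> \<rho> S" by blast
  hence "lebesgue_dec m \<mu> (fst (\<rho>,S)) (snd (\<rho>,S))" by simp
  hence "lebesgue_dec m \<mu> (fst (SOME p. lebesgue_dec m \<mu> (fst p) (snd p))) (snd (SOME p. lebesgue_dec m \<mu> (fst p) (snd p)))"
    by (rule someI[where P="\<lambda>p. lebesgue_dec m \<mu> (fst p) (snd p)"])
  thus ?thesis unfolding ld_rho_def ld_S_def .
qed

lemma ld_ac_exists:
  fixes m :: "'a::topological_space measure"
  assumes sf: "sigma_finite_measure m" and sm: "sets m = sets borel"
    and fin: "finite_measure \<mu>" and smu: "sets \<mu> = sets borel"
    and ac: "absolutely_continuous m \<mu>"
  shows "\<exists>\<rho> S. lebesgue_dec m \<mu> \<rho> S"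
proof -
  interpret sigma_finite_measure m by fact
  obtain f where f: "f \<in> borel_measurable m" "density m f = \<mu>"
    using Radon_Nikodym[OF ac] smu sm by auto
  have fb: "f \<in> borel_measurable borel" using f(1) measurable_cong_sets[OF sm refl] by blast
  have "emeasure \<mu> (space \<mu>) = emeasure (density m f) (space m)"
    using f(2) sets_eq_imp_space_eq[OF smu] sets_eq_imp_space_eq[OF sm] by simp
  also have "\<dots> = integral\<^sup>N m f"
    using f(1) by (subst emeasure_density) (auto intro!: nn_integral_cong)
  finally have "integral\<^sup>N m f = emeasure \<mu> (space \<mu>)" ..
  hence "integral\<^sup>N m f \<noteq> \<infinity>" using fin finite_measure.emeasure_finite by auto
  hence ae: "AE x in m. f x \<noteq> \<infinity>" using f(1) nn_integral_PInf_AE by blast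
  show ?thesis
  proof (intro exI[of _ "\<lambda>x. enn2real (f x)"] exI[of _ "{}"], unfold lebesgue_dec_def, intro conjI ballI allI)
    show "(\<lambda>x. enn2real (f x)) \<in> borel_measurable borel" using fb by measurable
    fix A :: "'a set" assume A: "A \<in> sets borel"
    have "emeasure \<mu> A = emeasure (density m f) A" using f by simp
    also have "\<dots> = (\<integral>\<^sup>+ x\<in>A. f x \<partial>m)" using A sm f(1) by (simp add: emeasure_density)
    also have "\<dots> = (\<integral>\<^sup>+ x\<in>A. ennreal (enn2real (f x)) \<partial>m)"
      by (rule nn_integral_cong_AE) (use ae in \<open>auto simp: less_top\<close>)
    finally show "emeasure \<mu> A = (\<integral>\<^sup>+ x\<in>A. ennreal (enn2real (f x)) \<partial>m) + emeasure \<mu> (A \<inter> {})" by simp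
  qed auto
qed

lemma ld_conc_exists:
  fixes m \<mu> :: "'a::topological_space measure"
  assumes "B \<in> sets borel" "emeasure m B = 0" "sets \<mu> = sets borel"
    and "emeasure \<mu> (UNIV - B) = 0"
  shows "lebesgue_dec m \<mu> (\<lambda>_. 0) B"
  unfolding lebesgue_dec_def
proof (intro conjI ballI allI)
  fix A :: "'a set" assume A: "A \<in> sets borel"
  have "emeasure \<mu> (A - B) = 0"
    by (rule emeasure_eq_0[of "UNIV - B" \<mu> "A - B", OF _ assms(4)]) (use assms(1,3) in auto)
  hence "emeasure \<mu> A = emeasure \<mu> (A \<inter> B)"
    using emeasure_Diff_null_set[of "A - B" \<mu>] A assms
    by (metis Diff_Diff_Int Diff_subset emeasure_Diff_null_set null_setsI sets.Diff Int_commute)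
  thus "emeasure \<mu> A = (\<integral>\<^sup>+ x\<in>A. ennreal 0 \<partial>m) + emeasure \<mu> (A \<inter> B)" by simp
qed (use assms in auto)


lemma ld_ac_null:
  assumes "lebesgue_dec m \<mu> \<rho> S" "absolutely_continuous m \<mu>" "sets m = sets borel"
  shows "emeasure \<mu> S = 0"
proof -
  have "S \<in> null_sets m" using assms(1,3) unfolding lebesgue_dec_def by auto
  hence "S \<in> null_sets \<mu>" using assms(2) unfolding absolutely_continuous_def by blast
  thus ?thesis by auto
qed

lemma ld_bound:
  fixes m \<mu> :: "'a::topological_space measure"
  assumes dec: "lebesgue_dec m \<mu> \<rho> S" and fin: "finite_measure \<mu>" and sm: "sets m = sets borel"
    and smu: "sets \<mu> = sets borel"
    and c: "0 \<le> c" and le: "\<And>A. A \<in> sets borel \<Longrightarrow> emeasure \<mu> A \<le> ennreal c * emeasure m A"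
  shows "AE x in m. \<rho> x \<le> c + 1"
proof -
  have rm: "\<rho> \<in> borel_measurable borel" and rp: "\<And>x. 0 \<le> \<rho> x" using dec unfolding lebesgue_dec_def by auto
  define A where "A = {x. c + 1 < \<rho> x}"
  have Ab: "A \<in> sets borel" unfolding A_def using rm by measurable
  have "(\<integral>\<^sup>+ x\<in>A. ennreal (c+1) \<partial>m) \<le> (\<integral>\<^sup>+ x\<in>A. ennreal (\<rho> x) \<partial>m)"
    by (rule nn_integral_mono) (auto simp: A_def indicator_def intro!: ennreal_leI)
  also have "\<dots> \<le> emeasure \<mu> A" using dec Ab unfolding lebesgue_dec_def by (metis le_iff_add)
  finally have ineq1: "ennreal (c+1) * emeasure m A \<le> emeasure \<mu> A"
    using Ab sm by (simp add: nn_integral_cmult_indicator)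
  have ineq: "ennreal (c+1) * emeasure m A \<le> ennreal c * emeasure m A"
    using ineq1 le[OF Ab] by (rule order.trans)
  have "emeasure \<mu> A < \<infinity>" using finite_measure.emeasure_finite[OF fin, of A] by (simp add: less_top)
  hence "ennreal (c+1) * emeasure m A < \<infinity>" using ineq1 by (rule le_less_trans[rotated])
  hence "emeasure m A \<noteq> \<infinity>" using c by (auto simp: ennreal_mult_less_top)
  then obtain r where r: "emeasure m A = ennreal r" "0 \<le> r" by (cases "emeasure m A") auto
  have "ennreal ((c+1) * r) \<le> ennreal (c * r)" using ineq r c by (simp add: ennreal_mult)
  hence "(c+1) * r \<le> c * r" using r c by (simp add: ennreal_le_iff)
  hence "r = 0" using r(2) by (simp add: algebra_simps)
  hence "A \<in> null_sets m" using r Ab sm by auto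
  thus ?thesis by (rule AE_I') (auto simp: A_def)
qed

lemma ld_zero:
  fixes m \<mu> :: "'a::topological_space measure"
  assumes dec: "lebesgue_dec m \<mu> \<rho> S" and sm: "sets m = sets borel" and smu: "sets \<mu> = sets borel"
    and B: "B \<in> sets borel" "emeasure m B = 0" "emeasure \<mu> (UNIV - B) = 0"
  shows "AE x in m. \<rho> x = 0"
proof -
  have rm: "\<rho> \<in> borel_measurable borel" and rp: "\<And>x. 0 \<le> \<rho> x" and Sb: "S \<in> sets borel"
    and Sn: "emeasure m S = 0" using dec unfolding lebesgue_dec_def by auto
  define A where "A = UNIV - B - S"
  have Ab: "A \<in> sets borel" unfolding A_def using B Sb by auto
  have "(\<integral>\<^sup>+ x\<in>A. ennreal (\<rho> x) \<partial>m) \<le> emeasure \<mu> A" using dec Ab unfolding lebesgue_dec_def by (metis le_iff_add)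
  also have "\<dots> \<le> emeasure \<mu> (UNIV - B)" by (rule emeasure_mono) (use B smu in \<open>auto simp: A_def\<close>)
  finally have "(\<integral>\<^sup>+ x. ennreal (\<rho> x) * indicator A x \<partial>m) = 0" using B by simp
  hence "AE x in m. ennreal (\<rho> x) * indicator A x = 0"
    using rm Ab sm by (subst (asm) nn_integral_0_iff_AE) (auto simp: measurable_cong_sets[OF sm refl])
  moreover have "AE x in m. x \<notin> B" using B sm by (intro AE_not_in) auto
  moreover have "AE x in m. x \<notin> S" using Sn Sb sm by (intro AE_not_in) auto
  ultimately show ?thesis
  proof eventually_elim
    case (elim x)
    hence "x \<in> A" by (simp add: A_def)
    with elim have "ennreal (\<rho> x) = 0" by simp
    thus ?case using rp[of x] by simp
  qed
qed

lemma ld_pos: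
  fixes m \<mu> :: "'a::topological_space measure"
  assumes dec: "lebesgue_dec m \<mu> \<rho> S" and sm: "sets m = sets borel" and smu: "sets \<mu> = sets borel"
    and B: "B \<in> sets borel" "emeasure m B = 0" "emeasure \<mu> B > 0"
  shows "emeasure \<mu> S > 0"
proof -
  have Sb: "S \<in> sets borel" using dec unfolding lebesgue_dec_def by auto
  have "AE x in m. x \<notin> B" using B sm by (intro AE_not_in) auto
  hence z: "(\<integral>\<^sup>+ x\<in>B. ennreal (\<rho> x) \<partial>m) = 0"
    by (subst nn_integral_cong_AE[where v="\<lambda>_. 0"]) (auto elim!: eventually_mono)
  have "emeasure \<mu> B = emeasure \<mu> (B \<inter> S)" using dec B z unfolding lebesgue_dec_def by simp
  also have "\<dots> \<le> emeasure \<mu> S" by (rule emeasure_mono) (use Sb smu in auto)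
  finally show ?thesis using B by (simp add: order_less_le_trans)
qed


lemma bcontfun_comp:
  assumes "continuous_on UNIV g"
  shows "(\<lambda>t. apply_bcontfun \<gamma> (g t)) \<in> bcontfun"
  unfolding bcontfun_def
proof (intro CollectI conjI)
  show "continuous_on UNIV (\<lambda>t. apply_bcontfun \<gamma> (g t))"
    by (rule continuous_on_compose2[OF continuous_on_apply_bcontfun assms]) auto
  show "bounded (range (\<lambda>t. apply_bcontfun \<gamma> (g t)))"
    by (rule bounded_subset[OF bounded_apply_bcontfun]) auto
qed

lemma apply_Bcontfun_comp:
  assumes "continuous_on UNIV g"
  shows "apply_bcontfun (Bcontfun (\<lambda>t. apply_bcontfun \<gamma> (g t))) = (\<lambda>t. apply_bcontfun \<gamma> (g t))"
  by (rule Bcontfun_inverse[OF bcontfun_comp[OF assms]])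

lemma Geo_clamp: "\<gamma> \<in> Geo \<Longrightarrow> apply_bcontfun \<gamma> t = apply_bcontfun \<gamma> (clamp01 t)"
  unfolding Geo_def by blast

lemma Geo_dist: "\<gamma> \<in> Geo \<Longrightarrow> s \<in> {0..1} \<Longrightarrow> t \<in> {0..1} \<Longrightarrow>
   dist (apply_bcontfun \<gamma> s) (apply_bcontfun \<gamma> t) = \<bar>s - t\<bar> * dist (apply_bcontfun \<gamma> 0) (apply_bcontfun \<gamma> 1)"
  unfolding Geo_def by blast

lemma restr01: assumes "\<gamma> \<in> Geo" shows "restr 0 1 \<gamma> = \<gamma>"
proof -
  have "(\<lambda>t. apply_bcontfun \<gamma> (clamp01 t * 1 + (1 - clamp01 t) * 0)) = apply_bcontfun \<gamma>"
    using Geo_clamp[OF assms] by auto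
  thus ?thesis unfolding restr_def by (simp add: apply_bcontfun_inverse)
qed

lemma rev_apply: "apply_bcontfun (reverse_geo \<gamma>) s = apply_bcontfun \<gamma> (1 - s)"
proof -
  have "continuous_on UNIV (\<lambda>t::real. 1 - t)" by (intro continuous_intros)
  thus ?thesis unfolding reverse_geo_def by (simp add: apply_Bcontfun_comp)
qed

lemma clamp01_rev: "clamp01 (1 - t) = 1 - clamp01 t"
  unfolding clamp01_def by linarith

lemma reverse_Geo: assumes g: "\<gamma> \<in> Geo" shows "reverse_geo \<gamma> \<in> Geo"
  unfolding Geo_def
proof (intro CollectI conjI allI ballI)
  fix t
  show "apply_bcontfun (reverse_geo \<gamma>) t = apply_bcontfun (reverse_geo \<gamma>) (clamp01 t)"
    unfolding rev_apply using Geo_clamp[OF g, of "1 - t"] clamp01_rev[of t] by simp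
next
  fix s t :: real assume st: "s \<in> {0..1}" "t \<in> {0..1}"
  have "dist (apply_bcontfun \<gamma> (1 - s)) (apply_bcontfun \<gamma> (1 - t)) =
    \<bar>(1 - s) - (1 - t)\<bar> * dist (apply_bcontfun \<gamma> 0) (apply_bcontfun \<gamma> 1)"
    using st by (intro Geo_dist[OF g]) auto
  thus "dist (apply_bcontfun (reverse_geo \<gamma>) s) (apply_bcontfun (reverse_geo \<gamma>) t) =
    \<bar>s - t\<bar> * dist (apply_bcontfun (reverse_geo \<gamma>) 0) (apply_bcontfun (reverse_geo \<gamma>) 1)"
    unfolding rev_apply by (simp add: dist_commute abs_minus_commute)
qed

lemma reverse_cont: "continuous_on UNIV (reverse_geo :: (real \<Rightarrow>\<^sub>C 'a::metric_space) \<Rightarrow> _)"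
proof -
  have "isCont reverse_geo f" for f :: "real \<Rightarrow>\<^sub>C 'a"
    unfolding continuous_at_eps_delta
  proof (intro allI impI exI conjI)
    fix e :: real and y :: "real \<Rightarrow>\<^sub>C 'a" assume "0 < e" "dist y f < e"
    have "dist (reverse_geo y) (reverse_geo f) \<le> dist y f"
      by (rule dist_bound) (simp add: rev_apply dist_bounded)
    thus "dist (reverse_geo y) (reverse_geo f) < e" using \<open>dist y f < e\<close> by linarith
  qed
  thus ?thesis by (simp add: continuous_at_imp_continuous_on)
qed

lemma reverse_meas: "reverse_geo \<in> measurable (GeoM :: (real \<Rightarrow>\<^sub>C 'a::metric_space) measure) GeoM"
  unfolding GeoM_def
  by (rule measurable_restrict_space3[OF borel_measurable_continuous_onI[OF reverse_cont]])
    (use reverse_Geo in auto)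


lemma dens_emeasure:
  assumes sp: "sets \<pi> = sets GeoM" and E: "E \<in> sets GeoM" and X: "X \<in> sets GeoM"
  shows "emeasure (density \<pi> (\<lambda>\<gamma>. ennreal (indicator E \<gamma> / p))) X = ennreal (1/p) * emeasure \<pi> (X \<inter> E)"
proof -
  have "emeasure (density \<pi> (\<lambda>\<gamma>. ennreal (indicator E \<gamma> / p))) X =
      (\<integral>\<^sup>+ \<gamma>. ennreal (indicator E \<gamma> / p) * indicator X \<gamma> \<partial>\<pi>)"
    using X E sp by (subst emeasure_density) (auto simp: measurable_cong_sets[OF sp refl])
  also have "\<dots> = (\<integral>\<^sup>+ \<gamma>. ennreal (1/p) * indicator (X \<inter> E) \<gamma> \<partial>\<pi>)"
    by (rule nn_integral_cong) (auto simp: indicator_def)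
  also have "\<dots> = ennreal (1/p) * emeasure \<pi> (X \<inter> E)"
    by (rule nn_integral_cmult_indicator) (use X E sp in simp)
  finally show ?thesis .
qed

lemma dens_marg:
  fixes m :: "'a::metric_space measure"
  assumes sp: "sets \<pi> = sets GeoM" and E: "E \<in> sets GeoM" and p: "0 < p"
    and sm: "sets m = sets borel"
    and dec: "lebesgue_dec m (distr \<pi> borel (eval_at s)) \<rho> S"
    and ac: "absolutely_continuous m (distr \<pi> borel (eval_at s))"
    and EL: "\<And>\<gamma>. \<gamma> \<in> E \<Longrightarrow> \<rho> (eval_at s \<gamma>) \<le> L" and L: "0 \<le> L"
    and A: "A \<in> sets borel"
  shows "emeasure (distr (density \<pi> (\<lambda>\<gamma>. ennreal (indicator E \<gamma> / p))) borel (eval_at s)) A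
           \<le> ennreal (L/p) * emeasure m A"
proof -
  let ?\<mu> = "distr \<pi> borel (eval_at s)"
  have spc: "space \<pi> = Geo" using sets_eq_imp_space_eq[OF sp] by simp
  have em: "eval_at s \<in> measurable \<pi> borel" using measurable_cong_sets[OF sp refl] eval_at_GeoM by blast
  have em2: "eval_at s \<in> measurable (density \<pi> (\<lambda>\<gamma>. ennreal (indicator E \<gamma> / p))) borel"
    using em by simp
  have rm: "\<rho> \<in> borel_measurable borel" using dec unfolding lebesgue_dec_def by auto
  define A' where "A' = A \<inter> {x. \<rho> x \<le> L}"
  have A'b: "A' \<in> sets borel" unfolding A'_def using A rm by measurable
  have X: "eval_at s -` A \<inter> Geo \<in> sets GeoM"
    using measurable_sets[OF eval_at_GeoM A] by simp
  have "emeasure (distr (density \<pi> (\<lambda>\<gamma>. ennreal (indicator E \<gamma> / p))) borel (eval_at s)) A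
      = emeasure (density \<pi> (\<lambda>\<gamma>. ennreal (indicator E \<gamma> / p))) (eval_at s -` A \<inter> Geo)"
    using em2 A spc by (subst emeasure_distr) auto
  also have "\<dots> = ennreal (1/p) * emeasure \<pi> ((eval_at s -` A \<inter> Geo) \<inter> E)"
    by (rule dens_emeasure[OF sp E X])
  also have "\<dots> \<le> ennreal (1/p) * emeasure \<pi> (eval_at s -` A' \<inter> space \<pi>)"
  proof (intro mult_left_mono emeasure_mono)
    show "eval_at s -` A \<inter> Geo \<inter> E \<subseteq> eval_at s -` A' \<inter> space \<pi>"
      using EL spc unfolding A'_def by auto
    show "eval_at s -` A' \<inter> space \<pi> \<in> sets \<pi>" using measurable_sets[OF em A'b] .
  qed simp
  also have "\<dots> = ennreal (1/p) * emeasure ?\<mu> A'"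
    using em A'b by (subst emeasure_distr) auto
  also have "\<dots> \<le> ennreal (1/p) * (ennreal L * emeasure m A)"
  proof (rule mult_left_mono)
    have "emeasure ?\<mu> A' = (\<integral>\<^sup>+ x\<in>A'. ennreal (\<rho> x) \<partial>m) + emeasure ?\<mu> (A' \<inter> S)"
      using dec A'b unfolding lebesgue_dec_def by blast
    also have "emeasure ?\<mu> (A' \<inter> S) = 0"
    proof -
      have "emeasure ?\<mu> S = 0" by (rule ld_ac_null[OF dec ac sm])
      moreover have "S \<in> sets ?\<mu>" using dec unfolding lebesgue_dec_def by simp
      ultimately show ?thesis using emeasure_eq_0[of S ?\<mu> "A' \<inter> S"] by blast
    qed
    also have "(\<integral>\<^sup>+ x\<in>A'. ennreal (\<rho> x) \<partial>m) \<le> (\<integral>\<^sup>+ x. ennreal L * indicator A x \<partial>m)"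
      by (intro nn_integral_mono) (auto simp: A'_def indicator_def intro!: ennreal_leI)
    also have "\<dots> = ennreal L * emeasure m A" by (rule nn_integral_cmult_indicator) (use A sm in simp)
    finally show "emeasure ?\<mu> A' \<le> ennreal L * emeasure m A" by simp
  qed simp
  also have "\<dots> = ennreal (L/p) * emeasure m A"
    using p L by (simp add: ennreal_mult[symmetric] mult.assoc[symmetric])
  finally show ?thesis .
qed


lemma enn_powr_meas[measurable]:
  assumes f[measurable]: "f \<in> borel_measurable M"
  shows "(\<lambda>x. enn_powr (f x) p) \<in> borel_measurable M"
proof -
  have "f -` {\<top>} \<inter> space M \<in> sets M" by (rule measurable_sets[OF f]) simp
  hence "{x \<in> space M. f x = \<top>} \<in> sets M" by (simp add: vimage_def Int_def conj_commute)
  thus ?thesis unfolding enn_powr_def by (rule measurable_If[rotated 2]) measurable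
qed

lemma borel_measurable_sinh[measurable]:
  assumes [measurable]: "f \<in> borel_measurable M"
  shows "(\<lambda>x. sinh (f x :: real)) \<in> borel_measurable M"
proof -
  have "sinh \<in> borel_measurable (borel :: real measure)"
    by (rule borel_measurable_continuous_onI) (intro continuous_intros)
  thus ?thesis using measurable_compose[OF assms] by blast
qed

lemma sigma_meas[measurable]: "(\<lambda>\<theta>. sigma_KN K N t \<theta>) \<in> borel_measurable borel"
  unfolding sigma_KN_def by measurable

lemma beta_meas[measurable]: "(\<lambda>\<theta>. beta_KN K N t \<theta>) \<in> borel_measurable borel"
  unfolding beta_KN_def by measurable

lemma enn_powr_pos: "0 < x \<Longrightarrow> 0 < enn_powr x p"
  unfolding enn_powr_def by (auto simp: enn2real_positive_iff less_top enn2real_eq_0_iff)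

lemma sigma_pos:
  assumes s: "0 < s" "s < 1" and th: "0 \<le> \<theta>" and N: "0 < N"
  shows "0 < sigma_KN K N s \<theta>"
proof -
  consider "K = 0" | "K \<noteq> 0" "K * \<theta>\<^sup>2 \<ge> N * pi\<^sup>2" | "K \<noteq> 0" "\<not> K * \<theta>\<^sup>2 \<ge> N * pi\<^sup>2" "\<theta> = 0"
    | "K > 0" "\<not> K * \<theta>\<^sup>2 \<ge> N * pi\<^sup>2" "\<theta> \<noteq> 0" | "K < 0" "\<theta> \<noteq> 0" by linarith
  thus ?thesis
  proof cases
    case 4
    define a where "a = \<theta> * sqrt (K / N)"
    have a0: "0 < a" unfolding a_def using 4 th N by simp
    have "a\<^sup>2 = \<theta>\<^sup>2 * (K / N)" unfolding a_def using 4 N by (simp add: power_mult_distrib)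
    also have "\<dots> < pi\<^sup>2" using 4 N by (simp add: field_simps)
    finally have "a < pi" using a0 by (smt (verit) pi_gt_zero power_mono)
    have "0 < sin (s * a)" using a0 s \<open>a < pi\<close>
      by (intro sin_gt_zero) (auto simp: mult_less_cancel_right1 intro: le_less_trans[of _ a] mult_le_cancel_right1[THEN iffD2])
    moreover have "0 < sin a" using a0 \<open>a < pi\<close> by (intro sin_gt_zero)
    ultimately have "0 < sin (s * a) / sin a" by simp
    thus ?thesis using 4 unfolding sigma_KN_def a_def by (simp add: mult.assoc)
  next
    case 5
    define a where "a = \<theta> * sqrt (- K / N)"
    have a0: "0 < a" unfolding a_def using 5 th N by (simp add: divide_neg_pos)
    have "0 < sinh (s * a)" "0 < sinh a" using a0 s by auto
    hence "0 < sinh (s * a) / sinh a" by simp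
    thus ?thesis using 5 unfolding sigma_KN_def a_def by (simp add: mult.assoc)
  qed (use s in \<open>auto simp: sigma_KN_def\<close>)
qed

lemma beta_pos:
  assumes s: "0 < s" "s < 1" and th: "0 \<le> \<theta>" and n: "1 < n"
  shows "0 < beta_KN K (ereal n) s \<theta>"
proof -
  have "0 < sigma_KN K (n - 1) s \<theta>" using sigma_pos[OF s th] n by simp
  hence "0 < enn_powr (sigma_KN K (n - 1) s \<theta>) (n - 1)" by (rule enn_powr_pos)
  moreover have "0 < ennreal (s powr (1 - n))" using s by simp
  ultimately show ?thesis using s unfolding beta_KN_def by (simp add: ennreal_zero_less_mult_iff)
qed


lemma ln_le_self: "0 \<le> (y::real) \<Longrightarrow> ln y \<le> y"
  by (cases "y = 0") (auto intro: order.trans[OF ln_le_minus_one])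

lemma ln_beta_inf_bound:
  assumes r: "0 \<le> \<rho>" "\<rho> \<le> c" and th: "0 \<le> \<theta>" "\<theta> \<le> L" and s: "0 < s" "s \<le> 1"
  shows "ln (\<rho> / enn2real (beta_KN K \<infinity> s \<theta>)) \<le> c * exp (\<bar>K\<bar> * L\<^sup>2)"
proof -
  define x where "x = K / 6 * (1 - s\<^sup>2) * \<theta>\<^sup>2"
  have b: "enn2real (beta_KN K \<infinity> s \<theta>) = exp x" using s unfolding beta_KN_def x_def by simp
  have s2: "0 \<le> 1 - s\<^sup>2" "1 - s\<^sup>2 \<le> 1" using s by (auto simp: power_le_one)
  have t2: "\<theta>\<^sup>2 \<le> L\<^sup>2" using th by (intro power_mono) auto
  have "\<bar>x\<bar> = \<bar>K\<bar> / 6 * (1 - s\<^sup>2) * \<theta>\<^sup>2" unfolding x_def using s2 by (simp add: abs_mult)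
  also have "\<dots> \<le> \<bar>K\<bar> * 1 * L\<^sup>2"
    using s2 t2 by (intro mult_mono) (auto simp: divide_le_eq)
  finally have xb: "- x \<le> \<bar>K\<bar> * L\<^sup>2" by linarith
  have "\<rho> / exp x = \<rho> * exp (- x)" by (simp add: exp_minus divide_inverse)
  also have "\<dots> \<le> c * exp (\<bar>K\<bar> * L\<^sup>2)"
    using r xb by (intro mult_mono) auto
  finally have "\<rho> / exp x \<le> c * exp (\<bar>K\<bar> * L\<^sup>2)" .
  moreover have "ln (\<rho> / exp x) \<le> \<rho> / exp x" using r by (intro ln_le_self) simp
  ultimately show ?thesis unfolding b by linarith
qed

lemma ent_plan_inf_fin:
  fixes m :: "'a::metric_space measure" and Q :: "(real \<Rightarrow>\<^sub>C 'a) measure"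
  assumes sQ: "sets Q = sets GeoM" and fQ: "emeasure Q (space Q) < \<infinity>"
    and nS: "\<not> emeasure (distr Q borel (eval_at 0)) (ld_S m (distr Q borel (eval_at 0))) > 0"
    and rp: "\<And>x. 0 \<le> ld_rho m (distr Q borel (eval_at 0)) x"
    and ae: "AE \<gamma> in Q. ld_rho m (distr Q borel (eval_at 0)) (eval_at 0 \<gamma>) \<le> c \<and> dist (eval_at 0 \<gamma>) (eval_at 1 \<gamma>) \<le> L"
    and s: "0 < s" "s \<le> 1"
  shows "Ent_plan m K \<infinity> s Q < \<infinity>"
proof -
  let ?\<rho> = "ld_rho m (distr Q borel (eval_at 0))"
  let ?f = "\<lambda>\<gamma>. ln (?\<rho> (eval_at 0 \<gamma>) / enn2real (beta_KN K \<infinity> s (dist (eval_at 0 \<gamma>) (eval_at 1 \<gamma>))))"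
  have "(\<integral>\<^sup>+ \<gamma>. ennreal (?f \<gamma>) \<partial>Q) \<le> (\<integral>\<^sup>+ \<gamma>. ennreal (c * exp (\<bar>K\<bar> * L\<^sup>2)) \<partial>Q)"
  proof (rule nn_integral_mono_AE)
    show "AE \<gamma> in Q. ennreal (?f \<gamma>) \<le> ennreal (c * exp (\<bar>K\<bar> * L\<^sup>2))"
      using ae
    proof eventually_elim
      case (elim \<gamma>)
      show ?case using elim rp s
        by (intro ennreal_leI ln_beta_inf_bound) auto
    qed
  qed
  also have "\<dots> = ennreal (c * exp (\<bar>K\<bar> * L\<^sup>2)) * emeasure Q (space Q)" by simp
  also have "\<dots> < \<infinity>" using fQ by (simp add: ennreal_mult_less_top less_top)
  finally have fin: "(\<integral>\<^sup>+ \<gamma>. ennreal (?f \<gamma>) \<partial>Q) < \<infinity>" .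
  have "Ent_plan m K \<infinity> s Q = ext_integral Q ?f"
    using nS unfolding Ent_plan_def Let_def by simp
  also have "\<dots> < \<infinity>"
    unfolding ext_integral_def using fin
    by (cases "(\<integral>\<^sup>+ \<gamma>. ennreal (?f \<gamma>) \<partial>Q)"; cases "(\<integral>\<^sup>+ \<gamma>. ennreal (- ?f \<gamma>) \<partial>Q)") auto
  finally show ?thesis .
qed


lemma dist01_meas[measurable]: "(\<lambda>\<gamma>. dist (eval_at 0 \<gamma>) (eval_at 1 \<gamma>)) \<in> borel_measurable (GeoM :: (real \<Rightarrow>\<^sub>C 'a::{metric_space,second_countable_topology}) measure)"
  by measurable

lemma ereal_neg_lt: "0 < (x::ereal) \<Longrightarrow> -x < 0"
  by (cases x) auto

lemma ent_plan_fin_neg: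
  fixes m :: "'a::{metric_space,second_countable_topology} measure" and Q :: "(real \<Rightarrow>\<^sub>C 'a) measure"
  assumes sQ: "sets Q = sets GeoM" and nz: "emeasure Q (space Q) \<noteq> 0"
    and rp: "\<And>x. 0 \<le> ld_rho m (distr Q borel (eval_at 0)) x"
    and ae: "AE \<gamma> in Q. eval_at 0 \<gamma> \<notin> ld_S m (distr Q borel (eval_at 0)) \<and> ld_rho m (distr Q borel (eval_at 0)) (eval_at 0 \<gamma>) \<le> c"
    and c: "0 < c" and s: "0 < s" "s < 1" and n: "1 < n"
  shows "Ent_plan m K (ereal n) s Q < 0"
proof -
  let ?\<rho> = "ld_rho m (distr Q borel (eval_at 0))"
  let ?S = "ld_S m (distr Q borel (eval_at 0))"
  let ?b = "\<lambda>\<gamma>::real \<Rightarrow>\<^sub>C 'a. enn_powr (beta_KN K (ereal n) s (dist (eval_at 0 \<gamma>) (eval_at 1 \<gamma>))) (1 / n)"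
  let ?g = "\<lambda>\<gamma>::real \<Rightarrow>\<^sub>C 'a. if eval_at 0 \<gamma> \<in> ?S then 0 else ?b \<gamma> *
              (if ?\<rho> (eval_at 0 \<gamma>) = 0 then \<top> else ennreal (?\<rho> (eval_at 0 \<gamma>) powr (- 1 / n)))"
  let ?h = "\<lambda>\<gamma>::real \<Rightarrow>\<^sub>C 'a. ?b \<gamma> * ennreal (c powr (- 1 / n))"
  have d: "(\<lambda>\<gamma>. dist (eval_at 0 \<gamma>) (eval_at 1 \<gamma>)) \<in> borel_measurable (GeoM :: (real \<Rightarrow>\<^sub>C 'a) measure)"
    by (rule dist01_meas)
  have "(\<lambda>\<gamma>. beta_KN K (ereal n) s (dist (eval_at 0 \<gamma>) (eval_at 1 \<gamma>))) \<in> borel_measurable (GeoM :: (real \<Rightarrow>\<^sub>C 'a) measure)"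
    using measurable_compose[OF d beta_meas] .
  hence "?b \<in> borel_measurable GeoM" by (rule enn_powr_meas)
  hence "?h \<in> borel_measurable GeoM" by simp
  hence hm: "?h \<in> borel_measurable Q" using measurable_cong_sets[OF sQ refl, of borel] by blast
  have hpos: "0 < ?h \<gamma>" for \<gamma>
    using c s n by (auto simp: ennreal_zero_less_mult_iff intro!: enn_powr_pos beta_pos)
  have "0 < (\<integral>\<^sup>+ \<gamma>. ?h \<gamma> \<partial>Q)"
  proof (rule ccontr)
    assume "\<not> 0 < (\<integral>\<^sup>+ \<gamma>. ?h \<gamma> \<partial>Q)"
    hence "(\<integral>\<^sup>+ \<gamma>. ?h \<gamma> \<partial>Q) = 0" by (simp add: not_less)
    hence "AE \<gamma> in Q. ?h \<gamma> = 0" using hm by (simp add: nn_integral_0_iff_AE)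
    hence "AE \<gamma> in Q. False" by (rule eventually_mono) (metis hpos less_irrefl)
    hence "emeasure Q (space Q) = 0" by (simp add: AE_iff_measurable[of "space Q" Q "\<lambda>_. False"])
    thus False using nz by simp
  qed
  also have "(\<integral>\<^sup>+ \<gamma>. ?h \<gamma> \<partial>Q) \<le> (\<integral>\<^sup>+ \<gamma>. ?g \<gamma> \<partial>Q)"
  proof (rule nn_integral_mono_AE)
    show "AE \<gamma> in Q. ?h \<gamma> \<le> ?g \<gamma>"
      using ae
    proof eventually_elim
      case (elim \<gamma>)
      show ?case
      proof (cases "?\<rho> (eval_at 0 \<gamma>) = 0")
        case False
        hence "0 < ?\<rho> (eval_at 0 \<gamma>)" using rp[of "eval_at 0 \<gamma>"] by linarith
        hence "c powr (- 1 / n) \<le> ?\<rho> (eval_at 0 \<gamma>) powr (- 1 / n)"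
          using elim n by (intro powr_mono2') auto
        thus ?thesis using elim False by (auto intro!: mult_left_mono ennreal_leI)
      qed (use elim in \<open>auto intro!: mult_left_mono\<close>)
    qed
  qed
  finally have pos: "0 < (\<integral>\<^sup>+ \<gamma>. ?g \<gamma> \<partial>Q)" .
  have "Ent_plan m K (ereal n) s Q = - enn2ereal (\<integral>\<^sup>+ \<gamma>. ?g \<gamma> \<partial>Q)"
    unfolding Ent_plan_def Let_def real_of_ereal.simps by simp
  also have "\<dots> < 0"
  proof -
    have "0 < enn2ereal (\<integral>\<^sup>+ \<gamma>. ?g \<gamma> \<partial>Q)"
      using pos less_ennreal.rep_eq[of 0 "\<integral>\<^sup>+ \<gamma>. ?g \<gamma> \<partial>Q"] zero_ennreal.rep_eq by simp
    thus ?thesis using ereal_neg_lt by blast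
  qed
  finally show ?thesis .
qed


lemma ac_main:
  fixes m :: "'a::polish_space measure" and \<pi> :: "(real \<Rightarrow>\<^sub>C 'a) measure"
  assumes sm: "sets m = sets borel" and sf: "sigma_finite_measure m"
    and pp: "prob_space \<pi>" and sp: "sets \<pi> = sets GeoM"
    and ac0: "absolutely_continuous m (distr \<pi> borel (eval_at 0))"
    and ac1: "absolutely_continuous m (distr \<pi> borel (eval_at 1))"
    and vs: "vs_CD_plan m K N \<pi>" and N: "1 < N" and t: "0 < t" "t < 1"
  shows "absolutely_continuous m (distr \<pi> borel (eval_at t))"
proof (rule ccontr)
  assume nac: "\<not> absolutely_continuous m (distr \<pi> borel (eval_at t))"
  interpret prob_space \<pi> by fact
  have spc: "space \<pi> = Geo" using sets_eq_imp_space_eq[OF sp] by simp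
  have em: "\<And>s. eval_at s \<in> measurable \<pi> borel"
    using measurable_cong_sets[OF sp refl] eval_at_GeoM by blast
  have finm: "\<And>s. finite_measure (distr \<pi> borel (eval_at s))"
    using em by (intro prob_space.finite_measure prob_space_distr) auto
  define \<rho>0 where "\<rho>0 = ld_rho m (distr \<pi> borel (eval_at 0))"
  define \<rho>1 where "\<rho>1 = ld_rho m (distr \<pi> borel (eval_at 1))"
  have dec0: "lebesgue_dec m (distr \<pi> borel (eval_at 0)) \<rho>0 (ld_S m (distr \<pi> borel (eval_at 0)))"
    unfolding \<rho>0_def by (rule ld_exists[OF ld_ac_exists[OF sf sm finm _ ac0]]) simp
  have dec1: "lebesgue_dec m (distr \<pi> borel (eval_at 1)) \<rho>1 (ld_S m (distr \<pi> borel (eval_at 1)))"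
    unfolding \<rho>1_def by (rule ld_exists[OF ld_ac_exists[OF sf sm finm _ ac1]]) simp
  have rm0[measurable]: "\<rho>0 \<in> borel_measurable borel" and rm1[measurable]: "\<rho>1 \<in> borel_measurable borel"
    using dec0 dec1 unfolding lebesgue_dec_def by auto
  obtain B where B: "B \<in> sets borel" "emeasure m B = 0" "emeasure (distr \<pi> borel (eval_at t)) B \<noteq> 0"
    using nac sm unfolding absolutely_continuous_def null_sets_def by auto
  define Et where "Et = eval_at t -` B \<inter> space \<pi>"
  have Et: "Et \<in> sets \<pi>" unfolding Et_def by (rule measurable_sets[OF em B(1)])
  have "emeasure \<pi> Et \<noteq> 0" using B(3) em B(1) unfolding Et_def by (subst (asm) emeasure_distr) auto
  hence mEt: "0 < measure \<pi> Et" using Et by (simp add: emeasure_eq_measure zero_less_measure_iff)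
  define D where "D n = {\<gamma> \<in> space \<pi>. real n < \<rho>0 (eval_at 0 \<gamma>) \<or> real n < \<rho>1 (eval_at 1 \<gamma>)
      \<or> real n < dist (eval_at 0 \<gamma>) (eval_at 1 \<gamma>)}" for n :: nat
  have Dm: "D n \<in> sets \<pi>" for n
  proof -
    have [measurable]: "eval_at s \<in> borel_measurable \<pi>" for s using em by blast
    show ?thesis unfolding D_def by measurable
  qed
  have "(\<lambda>n. measure \<pi> (D n)) \<longlonglongrightarrow> measure \<pi> (\<Inter>n. D n)"
  proof (rule finite_Lim_measure_decseq)
    show "range D \<subseteq> sets \<pi>" using Dm by blast
    show "decseq D"
    proof (rule decseq_SucI)
      fix k show "D (Suc k) \<subseteq> D k" unfolding D_def by auto
    qed
  qed
  moreover have "(\<Inter>n. D n) = {}"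
  proof -
    have "\<gamma> \<notin> D (nat \<lceil>max (\<rho>0 (eval_at 0 \<gamma>)) (max (\<rho>1 (eval_at 1 \<gamma>)) (dist (eval_at 0 \<gamma>) (eval_at 1 \<gamma>)))\<rceil>)" for \<gamma>
    proof -
      let ?M = "max (\<rho>0 (eval_at 0 \<gamma>)) (max (\<rho>1 (eval_at 1 \<gamma>)) (dist (eval_at 0 \<gamma>) (eval_at 1 \<gamma>)))"
      have "?M \<le> real (nat \<lceil>?M\<rceil>)" by (rule real_nat_ceiling_ge)
      thus ?thesis unfolding D_def by auto
    qed
    thus ?thesis by blast
  qed
  ultimately have "(\<lambda>n. measure \<pi> (D n)) \<longlonglongrightarrow> 0" by simp
  hence "eventually (\<lambda>k. measure \<pi> (D k) < measure \<pi> Et) sequentially"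
    using mEt by (rule order_tendstoD(2))
  then obtain N0 where "\<forall>k\<ge>N0. measure \<pi> (D k) < measure \<pi> Et" unfolding eventually_sequentially by blast
  then obtain n where n: "measure \<pi> (D n) < measure \<pi> Et" by blast
  define E where "E = Et - D n"
  have Em: "E \<in> sets \<pi>" unfolding E_def using Et Dm by auto
  have EG: "E \<in> sets GeoM" using Em sp by simp
  define p where "p = measure \<pi> E"
  have "measure \<pi> Et \<le> measure \<pi> (E \<union> D n)" using Em Dm Et by (intro finite_measure_mono) (auto simp: E_def)
  also have "\<dots> \<le> p + measure \<pi> (D n)" unfolding p_def using Em Dm by (rule measure_Un_le)
  finally have p: "0 < p" using n by linarith
  define L where "L = real n"
  have L: "0 \<le> L" unfolding L_def by simp
  have Eprop: "\<gamma> \<in> Geo \<and> eval_at t \<gamma> \<in> B \<and> \<rho>0 (eval_at 0 \<gamma>) \<le> L \<and> \<rho>1 (eval_at 1 \<gamma>) \<le> L \<and>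
      dist (eval_at 0 \<gamma>) (eval_at 1 \<gamma>) \<le> L" if "\<gamma> \<in> E" for \<gamma>
    using that spc unfolding E_def Et_def D_def L_def by (auto simp: not_less)
  have EG[measurable]: "E \<in> sets GeoM" using Em sp by simp
  have EGeo: "E \<subseteq> Geo" using Em spc sets.sets_into_space by blast
  define F where "F \<gamma> = indicator E \<gamma> / p" for \<gamma>
  have Fm: "F \<in> borel_measurable GeoM" unfolding F_def by measurable
  have F0: "\<forall>\<gamma>. 0 \<le> F \<gamma>" using p by (simp add: F_def)
  have Fb: "\<exists>C. \<forall>\<gamma>. F \<gamma> \<le> C"
    by (rule exI[of _ "1/p"]) (use p in \<open>simp add: F_def indicator_def divide_right_mono\<close>)
  have FI: "(\<integral>\<^sup>+ \<gamma>. ennreal (F \<gamma>) \<partial>\<pi>) = 1"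
  proof -
    have "(\<integral>\<^sup>+ \<gamma>. ennreal (F \<gamma>) \<partial>\<pi>) = (\<integral>\<^sup>+ \<gamma>. ennreal (1/p) * indicator E \<gamma> \<partial>\<pi>)"
      by (rule nn_integral_cong) (simp add: F_def indicator_def)
    also have "\<dots> = ennreal (1/p) * emeasure \<pi> E" by (rule nn_integral_cmult_indicator[OF Em])
    also have "\<dots> = ennreal (1/p) * ennreal p" by (simp add: emeasure_eq_measure p_def)
    also have "\<dots> = 1" using p by (simp add: ennreal_mult[symmetric])
    finally show ?thesis .
  qed
  define P where "P = density \<pi> (\<lambda>\<gamma>. ennreal (F \<gamma>))"
  have sP: "sets P = sets GeoM" unfolding P_def using sp by simp
  have spP: "space P = Geo" unfolding P_def using spc by simp
  have Peq: "distr P GeoM (restr 0 1) = P"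
  proof -
    have "distr P GeoM (restr 0 1) = distr P GeoM (\<lambda>x. x)"
      by (rule distr_cong) (auto simp: restr01 spP)
    also have "\<dots> = P" by (rule distr_id2) (simp add: sP)
    finally show ?thesis .
  qed
  have H: "\<forall>t1 t2 t. 0 \<le> t1 \<and> t1 < t2 \<and> t2 \<le> 1 \<and> 0 \<le> t \<and> t \<le> 1 \<longrightarrow>
         (let \<pi>' = distr P GeoM (restr t1 t2) in
          Ent m N (distr \<pi>' borel (eval_at t))
            \<le> ereal (1 - t) * Ent_plan m K N (1 - t) \<pi>'
              + ereal t * Ent_plan m K N t (plan_inv \<pi>'))"
    using vs Fm F0 Fb FI unfolding vs_CD_plan_def P_def by blast
  have ineq: "Ent m N (distr P borel (eval_at t)) \<le> ereal (1 - t) * Ent_plan m K N (1 - t) P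
              + ereal t * Ent_plan m K N t (plan_inv P)"
    using H[rule_format, of 0 1 t] t unfolding Let_def Peq by simp
  have eP: "emeasure P X = ennreal (1/p) * emeasure \<pi> (X \<inter> E)" if "X \<in> sets GeoM" for X
    unfolding P_def F_def by (rule dens_emeasure[OF sp EG that])
  have PE: "emeasure P (space P) = 1"
  proof -
    have "emeasure P (space P) = ennreal (1/p) * emeasure \<pi> (Geo \<inter> E)" unfolding spP
      by (rule eP) (metis space_GeoM sets.top)
    also have "Geo \<inter> E = E" using EGeo by blast
    also have "ennreal (1/p) * emeasure \<pi> E = 1"
      using p by (simp add: emeasure_eq_measure p_def ennreal_mult[symmetric])
    finally show ?thesis .
  qed
  have emP: "\<And>s. eval_at s \<in> measurable P borel"
    using measurable_cong_sets[OF sP refl] eval_at_GeoM by blast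
  have emarg: "emeasure (distr P borel (eval_at s)) X = ennreal (1/p) * emeasure \<pi> ((eval_at s -` X \<inter> Geo) \<inter> E)"
    if "X \<in> sets borel" for s X
  proof -
    have "emeasure (distr P borel (eval_at s)) X = emeasure P (eval_at s -` X \<inter> Geo)"
      using emP that spP by (subst emeasure_distr) auto
    also have "\<dots> = ennreal (1/p) * emeasure \<pi> ((eval_at s -` X \<inter> Geo) \<inter> E)"
      by (rule eP) (use measurable_sets[OF eval_at_GeoM that] in simp)
    finally show ?thesis .
  qed
  define \<mu>t where "\<mu>t = distr P borel (eval_at t)"
  have c1: "emeasure \<mu>t (UNIV - B) = 0"
  proof -
    have "(eval_at t -` (UNIV - B) \<inter> Geo) \<inter> E = {}" using Eprop by blast
    thus ?thesis unfolding \<mu>t_def using B(1) by (subst emarg) auto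
  qed
  have c2: "0 < emeasure \<mu>t B"
  proof -
    have "(eval_at t -` B \<inter> Geo) \<inter> E = E" using Eprop by blast
    hence "emeasure \<mu>t B = ennreal (1/p) * emeasure \<pi> E" unfolding \<mu>t_def using B(1) by (subst emarg) auto
    also have "\<dots> = 1" using p by (simp add: emeasure_eq_measure p_def ennreal_mult[symmetric])
    finally show ?thesis by simp
  qed
  have smt: "sets \<mu>t = sets borel" unfolding \<mu>t_def by simp
  have dect: "lebesgue_dec m \<mu>t (ld_rho m \<mu>t) (ld_S m \<mu>t)"
    by (rule ld_exists) (use ld_conc_exists[OF B(1) B(2) smt c1] in blast)
  have rt0: "AE x in m. ld_rho m \<mu>t x = 0" by (rule ld_zero[OF dect sm smt B(1) B(2) c1])
  have St: "0 < emeasure \<mu>t (ld_S m \<mu>t)" by (rule ld_pos[OF dect sm smt B(1) B(2) c2])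
  have finP: "finite_measure P" using PE by (intro finite_measureI) simp
  have margs: "absolutely_continuous m (distr P borel (eval_at s)) \<and>
     lebesgue_dec m (distr P borel (eval_at s)) (ld_rho m (distr P borel (eval_at s))) (ld_S m (distr P borel (eval_at s))) \<and>
     emeasure (distr P borel (eval_at s)) (ld_S m (distr P borel (eval_at s))) = 0 \<and>
     (AE \<gamma> in P. eval_at s \<gamma> \<notin> ld_S m (distr P borel (eval_at s)) \<and>
        ld_rho m (distr P borel (eval_at s)) (eval_at s \<gamma>) \<le> L/p + 1)"
    if dec: "lebesgue_dec m (distr \<pi> borel (eval_at s)) \<rho> S"
      and acs: "absolutely_continuous m (distr \<pi> borel (eval_at s))"
      and EL: "\<And>\<gamma>. \<gamma> \<in> E \<Longrightarrow> \<rho> (eval_at s \<gamma>) \<le> L" for s \<rho> S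
  proof -
    let ?\<mu> = "distr P borel (eval_at s)"
    have sm': "sets ?\<mu> = sets borel" by simp
    have bnd: "emeasure ?\<mu> A \<le> ennreal (L/p) * emeasure m A" if "A \<in> sets borel" for A
      using dens_marg[OF sp EG p sm dec acs EL L that] unfolding P_def F_def .
    have ac': "absolutely_continuous m ?\<mu>"
      unfolding absolutely_continuous_def
    proof
      fix A assume "A \<in> null_sets m"
      hence A: "A \<in> sets borel" "emeasure m A = 0" using sm by auto
      have "emeasure ?\<mu> A \<le> 0" using bnd[OF A(1)] A(2) by simp
      thus "A \<in> null_sets ?\<mu>" using A(1) by auto
    qed
    have fin': "finite_measure ?\<mu>" using emP by (intro finite_measure.finite_measure_distr[OF finP]) 
    have dec': "lebesgue_dec m ?\<mu> (ld_rho m ?\<mu>) (ld_S m ?\<mu>)"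
      by (rule ld_exists[OF ld_ac_exists[OF sf sm fin' sm' ac']])
    have bnd': "AE x in m. ld_rho m ?\<mu> x \<le> L/p + 1"
      by (rule ld_bound[OF dec' fin' sm sm']) (use p L bnd in auto)
    have S0: "emeasure ?\<mu> (ld_S m ?\<mu>) = 0" by (rule ld_ac_null[OF dec' ac' sm])
    have Sb: "ld_S m ?\<mu> \<in> sets borel" using dec' unfolding lebesgue_dec_def by blast
    have "AE x in ?\<mu>. x \<notin> ld_S m ?\<mu> \<and> ld_rho m ?\<mu> x \<le> L/p + 1"
    proof -
      have "AE x in ?\<mu>. x \<notin> ld_S m ?\<mu>" using Sb by (intro AE_not_in null_setsI[OF S0]) simp
      moreover have "AE x in ?\<mu>. ld_rho m ?\<mu> x \<le> L/p + 1"
        by (rule absolutely_continuous_AE[OF _ ac' bnd']) (simp add: sm)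
      ultimately show ?thesis by eventually_elim simp
    qed
    hence "AE \<gamma> in P. eval_at s \<gamma> \<notin> ld_S m ?\<mu> \<and> ld_rho m ?\<mu> (eval_at s \<gamma>) \<le> L/p + 1"
      by (rule AE_distrD[OF emP])
    thus ?thesis using ac' dec' S0 by blast
  qed
  have EL0: "\<And>\<gamma>. \<gamma> \<in> E \<Longrightarrow> \<rho>0 (eval_at 0 \<gamma>) \<le> L" and EL1: "\<And>\<gamma>. \<gamma> \<in> E \<Longrightarrow> \<rho>1 (eval_at 1 \<gamma>) \<le> L"
    using Eprop by blast+
  define \<mu>0' where "\<mu>0' = distr P borel (eval_at 0)"
  define \<mu>1' where "\<mu>1' = distr P borel (eval_at 1)"
  have m0: "absolutely_continuous m \<mu>0'" "lebesgue_dec m \<mu>0' (ld_rho m \<mu>0') (ld_S m \<mu>0')"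
     "emeasure \<mu>0' (ld_S m \<mu>0') = 0"
     "AE \<gamma> in P. eval_at 0 \<gamma> \<notin> ld_S m \<mu>0' \<and> ld_rho m \<mu>0' (eval_at 0 \<gamma>) \<le> L/p + 1"
    using margs[OF dec0 ac0 EL0] unfolding \<mu>0'_def by blast+
  have m1: "absolutely_continuous m \<mu>1'" "lebesgue_dec m \<mu>1' (ld_rho m \<mu>1') (ld_S m \<mu>1')"
     "emeasure \<mu>1' (ld_S m \<mu>1') = 0"
     "AE \<gamma> in P. eval_at 1 \<gamma> \<notin> ld_S m \<mu>1' \<and> ld_rho m \<mu>1' (eval_at 1 \<gamma>) \<le> L/p + 1"
    using margs[OF dec1 ac1 EL1] unfolding \<mu>1'_def by blast+
  have aeE: "AE \<gamma> in P. \<gamma> \<in> E"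
  proof (rule AE_I')
    show "Geo - E \<in> null_sets P"
    proof -
      have GE: "Geo - E \<in> sets GeoM" using EG by (metis space_GeoM sets.Diff sets.top)
      have "emeasure P (Geo - E) = ennreal (1/p) * emeasure \<pi> ((Geo - E) \<inter> E)" by (rule eP[OF GE])
      also have "(Geo - E) \<inter> E = {}" by blast
      finally have "emeasure P (Geo - E) = 0" by simp
      thus ?thesis using GE sP by (intro null_setsI) auto
    qed
  qed (use spP in auto)
  have nzP: "emeasure P (space P) \<noteq> 0" using PE by simp
  have rp0: "\<And>x. 0 \<le> ld_rho m \<mu>0' x" using m0(2) unfolding lebesgue_dec_def by blast
  have rp1: "\<And>x. 0 \<le> ld_rho m \<mu>1' x" using m1(2) unfolding lebesgue_dec_def by blast
  have st: "0 < 1 - t" "1 - t \<le> 1" "1 - t < 1" using t by auto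
  show False
  proof (cases "N = \<infinity>")
    case True
    have LHS: "Ent m N (distr P borel (eval_at t)) = \<infinity>"
      using St True unfolding Ent_def \<mu>t_def by simp
    have E0: "Ent_plan m K N (1 - t) P < \<infinity>"
      unfolding True
    proof (rule ent_plan_inf_fin[OF sP _ _ _ _ st(1,2)])
      show "emeasure P (space P) < \<infinity>" using PE by simp
      show "\<not> 0 < emeasure (distr P borel (eval_at 0)) (ld_S m (distr P borel (eval_at 0)))"
        using m0(3) unfolding \<mu>0'_def by simp
      show "\<And>x. 0 \<le> ld_rho m (distr P borel (eval_at 0)) x" using rp0 unfolding \<mu>0'_def .
      show "AE \<gamma> in P. ld_rho m (distr P borel (eval_at 0)) (eval_at 0 \<gamma>) \<le> L/p + 1 \<and>
          dist (eval_at 0 \<gamma>) (eval_at 1 \<gamma>) \<le> L"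
        using m0(4) aeE unfolding \<mu>0'_def by eventually_elim (use Eprop in blast)
    qed
    define Q where "Q = plan_inv P"
    have revP: "reverse_geo \<in> measurable P GeoM" using measurable_cong_sets[OF sP refl] reverse_meas by blast
    have Qd: "Q = distr P GeoM reverse_geo" unfolding Q_def plan_inv_def ..
    have sQ: "sets Q = sets GeoM" unfolding Qd by simp
    have Qm: "distr Q borel (eval_at 0) = \<mu>1'"
    proof -
      have "distr Q borel (eval_at 0) = distr P borel (eval_at 0 \<circ> reverse_geo)"
        unfolding Qd by (rule distr_distr[OF eval_at_GeoM revP])
      also have "\<dots> = \<mu>1'" unfolding \<mu>1'_def
        by (rule distr_cong) (auto simp: eval_at_def rev_apply)
      finally show ?thesis .
    qed
    have E1: "Ent_plan m K N t Q < \<infinity>"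
      unfolding True
    proof (rule ent_plan_inf_fin[OF sQ _ _ _ _ t(1)])
      show "t \<le> 1" using t by simp
      have "emeasure Q (space Q) = emeasure P (reverse_geo -` Geo \<inter> space P)"
        unfolding Qd using revP by (subst emeasure_distr) (auto, metis space_GeoM sets.top)
      also have "reverse_geo -` Geo \<inter> space P = space P" using reverse_Geo spP by blast
      finally show "emeasure Q (space Q) < \<infinity>" using PE by simp
      show "\<not> 0 < emeasure (distr Q borel (eval_at 0)) (ld_S m (distr Q borel (eval_at 0)))"
        using m1(3) unfolding Qm by simp
      show "\<And>x. 0 \<le> ld_rho m (distr Q borel (eval_at 0)) x" using rp1 unfolding Qm .
      have rm1'[measurable]: "ld_rho m \<mu>1' \<in> borel_measurable borel" using m1(2) unfolding lebesgue_dec_def by blast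
      have pm: "{x \<in> space GeoM. ld_rho m \<mu>1' (eval_at 0 x) \<le> L/p + 1 \<and> dist (eval_at 0 x) (eval_at 1 x) \<le> L} \<in> sets GeoM"
        by measurable
      have "AE \<gamma> in P. ld_rho m \<mu>1' (eval_at 0 (reverse_geo \<gamma>)) \<le> L/p + 1 \<and>
          dist (eval_at 0 (reverse_geo \<gamma>)) (eval_at 1 (reverse_geo \<gamma>)) \<le> L"
        using m1(4) aeE
      proof eventually_elim
        case (elim \<gamma>)
        thus ?case using Eprop[OF elim(2)] by (simp add: eval_at_def rev_apply dist_commute)
      qed
      hence "AE \<gamma> in Q. ld_rho m \<mu>1' (eval_at 0 \<gamma>) \<le> L/p + 1 \<and> dist (eval_at 0 \<gamma>) (eval_at 1 \<gamma>) \<le> L"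
        unfolding Qd by (subst AE_distr_iff[OF revP pm])
      thus "AE \<gamma> in Q. ld_rho m (distr Q borel (eval_at 0)) (eval_at 0 \<gamma>) \<le> L/p + 1 \<and>
          dist (eval_at 0 \<gamma>) (eval_at 1 \<gamma>) \<le> L" unfolding Qm .
    qed
    have "ereal (1 - t) * Ent_plan m K N (1 - t) P + ereal t * Ent_plan m K N t (plan_inv P) < \<infinity>"
      using E0 E1 st t unfolding Q_def
      by (cases "Ent_plan m K N (1 - t) P"; cases "Ent_plan m K N t (plan_inv P)") auto
    thus False using ineq unfolding LHS by (metis leD)
  next
    case False
    then obtain n where n: "N = ereal n" using N by (cases N) auto
    have n1: "1 < n" using N n by simp
    have LHS: "Ent m N (distr P borel (eval_at t)) = 0"
    proof -
      have "(\<integral>\<^sup>+ x. ennreal (ld_rho m \<mu>t x powr (1 - 1 / n)) \<partial>m) = (\<integral>\<^sup>+ x. 0 \<partial>m)"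
        by (rule nn_integral_cong_AE) (use rt0 in \<open>auto elim!: eventually_mono\<close>)
      thus ?thesis using n unfolding Ent_def \<mu>t_def by (simp add: zero_ennreal.rep_eq)
    qed
    have E0: "Ent_plan m K N (1 - t) P < 0"
      unfolding n
    proof (rule ent_plan_fin_neg[OF sP nzP _ _ _ st(1,3) n1])
      show "\<And>x. 0 \<le> ld_rho m (distr P borel (eval_at 0)) x" using rp0 unfolding \<mu>0'_def .
      show "AE \<gamma> in P. eval_at 0 \<gamma> \<notin> ld_S m (distr P borel (eval_at 0)) \<and>
          ld_rho m (distr P borel (eval_at 0)) (eval_at 0 \<gamma>) \<le> L/p + 1"
        using m0(4) unfolding \<mu>0'_def .
      have "0 \<le> L/p" using L p by simp
      thus "0 < L/p + 1" by linarith
    qed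
    have E1: "Ent_plan m K N t (plan_inv P) \<le> 0"
      using n unfolding Ent_plan_def Let_def by simp
    have "ereal (1 - t) * Ent_plan m K N (1 - t) P + ereal t * Ent_plan m K N t (plan_inv P) < 0"
      using E0 E1 st t
      by (cases "Ent_plan m K N (1 - t) P"; cases "Ent_plan m K N t (plan_inv P)") (auto intro!: add_neg_nonpos mult_pos_neg mult_nonneg_nonpos)
    thus False using ineq unfolding LHS by (metis leD)
  qed
qed




lemma sq_bound: "(2 * u + v + w)^2 \<le> 6 * (u^2 + v^2 + (w::real)^2)"
proof -
  have e: "6 * (u^2 + v^2 + w^2) - (2 * u + v + w)^2 = (u - 2 * v)^2 + (u - 2 * w)^2 + (v - w)^2"
    by (simp add: power2_eq_square algebra_simps)
  have "0 \<le> (u - 2 * v)^2 + (u - 2 * w)^2 + (v - w)^2" by simp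
  thus ?thesis using e by linarith
qed

lemma ennreal_6: "0 \<le> x \<Longrightarrow> ennreal (6 * x) = 6 * ennreal x"
proof -
  assume "0 \<le> x"
  hence "ennreal (6 * x) = ennreal 6 * ennreal x" by (intro ennreal_mult) auto
  thus ?thesis by simp
qed

lemma ennreal_sum3:
  assumes "0 \<le> x" "0 \<le> y" "0 \<le> z"
  shows "ennreal (6 * x + 6 * y + 6 * z) = 6 * ennreal x + 6 * ennreal y + ennreal (6 * z)"
proof -
  have "ennreal (6 * x + 6 * y + 6 * z) = ennreal (6 * x + 6 * y) + ennreal (6 * z)"
    by (rule ennreal_plus) (use assms in auto)
  also have "ennreal (6 * x + 6 * y) = ennreal (6 * x) + ennreal (6 * y)"
    by (rule ennreal_plus) (use assms in auto)
  finally show ?thesis using ennreal_6[OF assms(1)] ennreal_6[OF assms(2)] by simp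
qed

lemma Geo_pt_bound:
  assumes g: "\<gamma> \<in> Geo" and t: "t \<in> {0..1}"
  shows "(dist (eval_at t \<gamma>) a)\<^sup>2 \<le> 6 * ((dist (eval_at 0 \<gamma>) a)\<^sup>2 + (dist (eval_at 1 \<gamma>) b)\<^sup>2 + (dist a b)\<^sup>2)"
proof -
  let ?d0 = "dist (eval_at 0 \<gamma>) a" and ?d1 = "dist (eval_at 1 \<gamma>) b" and ?D = "dist a b"
  have "dist (eval_at t \<gamma>) (eval_at 0 \<gamma>) = \<bar>t - 0\<bar> * dist (eval_at 0 \<gamma>) (eval_at 1 \<gamma>)"
    unfolding eval_at_def using t by (intro Geo_dist[OF g]) auto
  also have "\<dots> \<le> dist (eval_at 0 \<gamma>) (eval_at 1 \<gamma>)" using t by (intro mult_left_le_one_le) auto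
  also have "\<dots> \<le> ?d0 + ?D + ?d1"
  proof -
    have "dist (eval_at 0 \<gamma>) (eval_at 1 \<gamma>) \<le> ?d0 + dist a (eval_at 1 \<gamma>)" by (rule dist_triangle)
    moreover have "dist a (eval_at 1 \<gamma>) \<le> ?D + dist b (eval_at 1 \<gamma>)" by (rule dist_triangle)
    moreover have "dist b (eval_at 1 \<gamma>) = ?d1" by (rule dist_commute)
    ultimately show ?thesis by linarith
  qed
  finally have h: "dist (eval_at t \<gamma>) (eval_at 0 \<gamma>) \<le> ?d0 + ?D + ?d1" .
  have "dist (eval_at t \<gamma>) a \<le> dist (eval_at t \<gamma>) (eval_at 0 \<gamma>) + ?d0" by (rule dist_triangle)
  also have "\<dots> \<le> 2 * ?d0 + ?d1 + ?D" using h by linarith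
  finally have "(dist (eval_at t \<gamma>) a)\<^sup>2 \<le> (2 * ?d0 + ?d1 + ?D)\<^sup>2" by (intro power_mono) auto
  also have "\<dots> \<le> 6 * (?d0\<^sup>2 + ?d1\<^sup>2 + ?D\<^sup>2)" by (rule sq_bound)
  finally show ?thesis .
qed

lemma P2_marg:
  fixes \<pi> :: "(real \<Rightarrow>\<^sub>C 'a::polish_space) measure"
  assumes pp: "prob_space \<pi>" and sp: "sets \<pi> = sets GeoM"
    and P0: "P2 (distr \<pi> borel (eval_at 0))" and P1: "P2 (distr \<pi> borel (eval_at 1))"
    and t: "t \<in> {0..1}"
  shows "P2 (distr \<pi> borel (eval_at t))"
proof -
  have spc: "space \<pi> = Geo" using sets_eq_imp_space_eq[OF sp] by simp
  have em[measurable]: "\<And>s. eval_at s \<in> measurable \<pi> borel"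
    using measurable_cong_sets[OF sp refl] eval_at_GeoM by blast
  obtain a where a: "(\<integral>\<^sup>+ x. ennreal ((dist x a)\<^sup>2) \<partial>distr \<pi> borel (eval_at 0)) < \<infinity>"
    using P0 unfolding P2_def by blast
  obtain b where b: "(\<integral>\<^sup>+ x. ennreal ((dist x b)\<^sup>2) \<partial>distr \<pi> borel (eval_at 1)) < \<infinity>"
    using P1 unfolding P2_def by blast
  have a': "(\<integral>\<^sup>+ \<gamma>. ennreal ((dist (eval_at 0 \<gamma>) a)\<^sup>2) \<partial>\<pi>) < \<infinity>"
    using a by (subst (asm) nn_integral_distr[OF em]) measurable
  have b': "(\<integral>\<^sup>+ \<gamma>. ennreal ((dist (eval_at 1 \<gamma>) b)\<^sup>2) \<partial>\<pi>) < \<infinity>"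
    using b by (subst (asm) nn_integral_distr[OF em]) measurable
  have "(\<integral>\<^sup>+ x. ennreal ((dist x a)\<^sup>2) \<partial>distr \<pi> borel (eval_at t))
      = (\<integral>\<^sup>+ \<gamma>. ennreal ((dist (eval_at t \<gamma>) a)\<^sup>2) \<partial>\<pi>)"
    by (rule nn_integral_distr[OF em]) measurable
  also have "\<dots> \<le> (\<integral>\<^sup>+ \<gamma>. 6 * ennreal ((dist (eval_at 0 \<gamma>) a)\<^sup>2)
        + 6 * ennreal ((dist (eval_at 1 \<gamma>) b)\<^sup>2) + ennreal (6 * (dist a b)\<^sup>2) \<partial>\<pi>)"
  proof (rule nn_integral_mono)
    fix \<gamma> assume "\<gamma> \<in> space \<pi>"
    hence "(dist (eval_at t \<gamma>) a)\<^sup>2 \<le> 6 * (dist (eval_at 0 \<gamma>) a)\<^sup>2 + 6 * (dist (eval_at 1 \<gamma>) b)\<^sup>2 + 6 * (dist a b)\<^sup>2"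
      using Geo_pt_bound[OF _ t, of \<gamma> a b] spc by (simp add: algebra_simps)
    hence "ennreal ((dist (eval_at t \<gamma>) a)\<^sup>2) \<le> ennreal (6 * (dist (eval_at 0 \<gamma>) a)\<^sup>2 + 6 * (dist (eval_at 1 \<gamma>) b)\<^sup>2 + 6 * (dist a b)\<^sup>2)"
      by (rule ennreal_leI)
    also have "\<dots> = 6 * ennreal ((dist (eval_at 0 \<gamma>) a)\<^sup>2)
        + 6 * ennreal ((dist (eval_at 1 \<gamma>) b)\<^sup>2) + ennreal (6 * (dist a b)\<^sup>2)"
      by (rule ennreal_sum3) auto
    finally show "ennreal ((dist (eval_at t \<gamma>) a)\<^sup>2) \<le> 6 * ennreal ((dist (eval_at 0 \<gamma>) a)\<^sup>2)
        + 6 * ennreal ((dist (eval_at 1 \<gamma>) b)\<^sup>2) + ennreal (6 * (dist a b)\<^sup>2)" .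
  qed
  also have "\<dots> = 6 * (\<integral>\<^sup>+ \<gamma>. ennreal ((dist (eval_at 0 \<gamma>) a)\<^sup>2) \<partial>\<pi>)
        + 6 * (\<integral>\<^sup>+ \<gamma>. ennreal ((dist (eval_at 1 \<gamma>) b)\<^sup>2) \<partial>\<pi>)
        + (\<integral>\<^sup>+ \<gamma>. ennreal (6 * (dist a b)\<^sup>2) \<partial>\<pi>)"
  proof -
    have mf: "(\<lambda>\<gamma>. ennreal ((dist (eval_at 0 \<gamma>) a)\<^sup>2)) \<in> borel_measurable \<pi>" by measurable
    have mg: "(\<lambda>\<gamma>. ennreal ((dist (eval_at 1 \<gamma>) b)\<^sup>2)) \<in> borel_measurable \<pi>" by measurable
    have mf6: "(\<lambda>\<gamma>. 6 * ennreal ((dist (eval_at 0 \<gamma>) a)\<^sup>2)) \<in> borel_measurable \<pi>" using mf by measurable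
    have mg6: "(\<lambda>\<gamma>. 6 * ennreal ((dist (eval_at 1 \<gamma>) b)\<^sup>2)) \<in> borel_measurable \<pi>" using mg by measurable
    have "(\<integral>\<^sup>+ \<gamma>. 6 * ennreal ((dist (eval_at 0 \<gamma>) a)\<^sup>2)
        + 6 * ennreal ((dist (eval_at 1 \<gamma>) b)\<^sup>2) + ennreal (6 * (dist a b)\<^sup>2) \<partial>\<pi>)
      = (\<integral>\<^sup>+ \<gamma>. 6 * ennreal ((dist (eval_at 0 \<gamma>) a)\<^sup>2) + 6 * ennreal ((dist (eval_at 1 \<gamma>) b)\<^sup>2) \<partial>\<pi>)
        + (\<integral>\<^sup>+ \<gamma>. ennreal (6 * (dist a b)\<^sup>2) \<partial>\<pi>)"
      by (rule nn_integral_add) (use mf6 mg6 in measurable)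
    also have "(\<integral>\<^sup>+ \<gamma>. 6 * ennreal ((dist (eval_at 0 \<gamma>) a)\<^sup>2) + 6 * ennreal ((dist (eval_at 1 \<gamma>) b)\<^sup>2) \<partial>\<pi>)
      = (\<integral>\<^sup>+ \<gamma>. 6 * ennreal ((dist (eval_at 0 \<gamma>) a)\<^sup>2) \<partial>\<pi>) + (\<integral>\<^sup>+ \<gamma>. 6 * ennreal ((dist (eval_at 1 \<gamma>) b)\<^sup>2) \<partial>\<pi>)"
      by (rule nn_integral_add[OF mf6 mg6])
    also have "(\<integral>\<^sup>+ \<gamma>. 6 * ennreal ((dist (eval_at 0 \<gamma>) a)\<^sup>2) \<partial>\<pi>) = 6 * (\<integral>\<^sup>+ \<gamma>. ennreal ((dist (eval_at 0 \<gamma>) a)\<^sup>2) \<partial>\<pi>)"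
      by (rule nn_integral_cmult[OF mf])
    also have "(\<integral>\<^sup>+ \<gamma>. 6 * ennreal ((dist (eval_at 1 \<gamma>) b)\<^sup>2) \<partial>\<pi>) = 6 * (\<integral>\<^sup>+ \<gamma>. ennreal ((dist (eval_at 1 \<gamma>) b)\<^sup>2) \<partial>\<pi>)"
      by (rule nn_integral_cmult[OF mg])
    finally show ?thesis .
  qed
  also have "\<dots> < \<infinity>"
  proof -
    have c: "(\<integral>\<^sup>+ \<gamma>. ennreal (6 * (dist a b)\<^sup>2) \<partial>\<pi>) = ennreal (6 * (dist a b)\<^sup>2)"
      using prob_space.emeasure_space_1[OF pp] by simp
    have A: "6 * (\<integral>\<^sup>+ \<gamma>. ennreal ((dist (eval_at 0 \<gamma>) a)\<^sup>2) \<partial>\<pi>) < \<infinity>"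
      using a' by (simp add: ennreal_mult_less_top)
    have B: "6 * (\<integral>\<^sup>+ \<gamma>. ennreal ((dist (eval_at 1 \<gamma>) b)\<^sup>2) \<partial>\<pi>) < \<infinity>"
      using b' by (simp add: ennreal_mult_less_top)
    show ?thesis unfolding c using A B by (simp add: ennreal_add_less_top)
  qed
  finally have fin: "(\<integral>\<^sup>+ x. ennreal ((dist x a)\<^sup>2) \<partial>distr \<pi> borel (eval_at t)) < \<infinity>" .
  have "prob_space (distr \<pi> borel (eval_at t))" by (rule prob_space.prob_space_distr[OF pp em])
  thus ?thesis unfolding P2_def prob_borel_def using fin by auto
qed


lemma marg_eq:
  fixes \<pi> :: "(real \<Rightarrow>\<^sub>C 'a::polish_space) measure"
  assumes sp: "sets \<pi> = sets GeoM"
  shows "distr (distr \<pi> borel (\<lambda>\<gamma>. (eval_at 0 \<gamma>, eval_at 1 \<gamma>))) borel fst = distr \<pi> borel (eval_at 0)"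
    and "distr (distr \<pi> borel (\<lambda>\<gamma>. (eval_at 0 \<gamma>, eval_at 1 \<gamma>))) borel snd = distr \<pi> borel (eval_at 1)"
proof -
  have "continuous_on UNIV (\<lambda>\<gamma>::real \<Rightarrow>\<^sub>C 'a. (eval_at 0 \<gamma>, eval_at 1 \<gamma>))"
    by (intro continuous_on_Pair continuous_eval_at)
  hence "(\<lambda>\<gamma>::real \<Rightarrow>\<^sub>C 'a. (eval_at 0 \<gamma>, eval_at 1 \<gamma>)) \<in> borel_measurable borel"
    by (rule borel_measurable_continuous_onI)
  hence "(\<lambda>\<gamma>::real \<Rightarrow>\<^sub>C 'a. (eval_at 0 \<gamma>, eval_at 1 \<gamma>)) \<in> borel_measurable GeoM"
    unfolding GeoM_def by (rule measurable_restrict_space1)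
  hence gm: "(\<lambda>\<gamma>. (eval_at 0 \<gamma>, eval_at 1 \<gamma>)) \<in> borel_measurable \<pi>"
    using measurable_cong_sets[OF sp refl] by blast
  have fm: "(fst :: 'a \<times> 'a \<Rightarrow> 'a) \<in> borel_measurable borel"
    by (rule borel_measurable_continuous_onI) (intro continuous_intros)
  have sm: "(snd :: 'a \<times> 'a \<Rightarrow> 'a) \<in> borel_measurable borel"
    by (rule borel_measurable_continuous_onI) (intro continuous_intros)
  show "distr (distr \<pi> borel (\<lambda>\<gamma>. (eval_at 0 \<gamma>, eval_at 1 \<gamma>))) borel fst = distr \<pi> borel (eval_at 0)"
    by (subst distr_distr[OF fm gm]) (simp add: comp_def)
  show "distr (distr \<pi> borel (\<lambda>\<gamma>. (eval_at 0 \<gamma>, eval_at 1 \<gamma>))) borel snd = distr \<pi> borel (eval_at 1)"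
    by (subst distr_distr[OF sm gm]) (simp add: comp_def)
qed

theorem lemma4p1:
  fixes m :: "'a::polish_space measure" and K :: real and N :: ereal
    and \<mu>0 \<mu>1 :: "'a measure" and \<pi> :: "(real \<Rightarrow>\<^sub>C 'a) measure"
  assumes "locally_finite_borel m"
    and "1 < N"
    and "very_strict_CD m K N"
    and "P2ac m \<mu>0" and "P2ac m \<mu>1"
    and "bounded_support \<mu>0" and "bounded_support \<mu>1"
    and "OptGeo \<mu>0 \<mu>1 \<pi>"
    and "vs_CD_plan m K N \<pi>"
  shows "\<forall>t\<in>{0<..<1}. P2ac m (distr \<pi> borel (eval_at t))"
proof
  fix t :: real assume t: "t \<in> {0<..<1}"
  have sm: "sets m = sets borel" using assms(1) unfolding locally_finite_borel_def by blast
  have sf: "sigma_finite_measure m" by (rule locally_finite_sigma_finite[OF assms(1)])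
  have pp: "prob_space \<pi>" and sp: "sets \<pi> = sets GeoM"
    and oc: "optimal_coupling \<mu>0 \<mu>1 (distr \<pi> borel (\<lambda>\<gamma>. (eval_at 0 \<gamma>, eval_at 1 \<gamma>)))"
    using assms(8) unfolding OptGeo_def by blast+
  have m0: "\<mu>0 = distr \<pi> borel (eval_at 0)" and m1: "\<mu>1 = distr \<pi> borel (eval_at 1)"
    using oc marg_eq[OF sp] unfolding optimal_coupling_def coupling_def by auto
  have P0: "P2 (distr \<pi> borel (eval_at 0))" and ac0: "absolutely_continuous m (distr \<pi> borel (eval_at 0))"
    using assms(4) unfolding m0 P2ac_def by blast+
  have P1: "P2 (distr \<pi> borel (eval_at 1))" and ac1: "absolutely_continuous m (distr \<pi> borel (eval_at 1))"
    using assms(5) unfolding m1 P2ac_def by blast+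
  have "P2 (distr \<pi> borel (eval_at t))" using t by (intro P2_marg[OF pp sp P0 P1]) auto
  moreover have "absolutely_continuous m (distr \<pi> borel (eval_at t))"
    using t by (intro ac_main[OF sm sf pp sp ac0 ac1 assms(9) assms(2)]) auto
  ultimately show "P2ac m (distr \<pi> borel (eval_at t))" unfolding P2ac_def by blast
qed

end
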